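(* Let $p$ be an odd prime and $q\in\mathbb C_p$ with $|1-q|_p<p^{-1/(p-1)}$. For $k,n\in\mathbb Z_+$ with $n\ge k$, $$\int_{\mathbb Z_p}\frac{B_{k,n}(x,q)}{\binom nk}\,d\mu_{-1}(x)=\sum_{m=0}^\infty\sum_{l=0}^{n-k}\binom{l+m-1}{m}\binom{n-k}{l}(-1)^{l+m}q^l(q-1)^mE_{l+m+k,q}.$$
   Context: For $x\in\mathbb Z_p$, $[x]_q=\frac{1-q^x}{1-q}$. The modified $q$-Bernstein polynomials are $B_{k,n}(x,q)=\binom nk[x]_q^k[1-x]_q^{n-k}$ for $0\le k\le n$. The fermionic $p$-adic integral of a uniformly differentiable $f:\mathbb Z_p\to\mathbb C_p$ is $\int_{\mathbb Z_p}f(x)\,d\mu_{-1}(x)=\lim_{N\to\infty}\sum_{x=0}^{p^N-1}f(x)(-1)^x$. The $q$-Euler numbers are $E_{n,q}=\int_{\mathbb Z_p}[x]_q^n\,d\mu_{-1}(x)$. Binomial coefficients $\binom{a}{m}=\frac{a(a-1)\cdots(a-m+1)}{m!}$ are the generalized ones (so $\binom{-1}{0}=1$ and $\binom{m-1}{m}=0$ for $m\ge1$). *)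

theory Defs
  imports Complex_Main "HOL-Computational_Algebra.Primes"
begin

text \<open>Abstract model of the ambient field C_p: a field K of characteristic 0
with an absolute value nv that is multiplicative, non-archimedean, complete,
algebraically closed, and normalised by nv p = 1/p (so it restricts to the
p-adic absolute value on Q and K contains Q_p).\<close>

definition nv_tendsto :: "('a::field \<Rightarrow> real) \<Rightarrow> (nat \<Rightarrow> 'a) \<Rightarrow> 'a \<Rightarrow> bool" where
  "nv_tendsto nv X L \<longleftrightarrow> ((\<lambda>N. nv (X N - L)) \<longlonglongrightarrow> 0)"

definition nv_sums :: "('a::field \<Rightarrow> real) \<Rightarrow> (nat \<Rightarrow> 'a) \<Rightarrow> 'a \<Rightarrow> bool" where
  "nv_sums nv g s \<longleftrightarrow> nv_tendsto nv (\<lambda>M. \<Sum>m<M. g m) s"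

definition Cp_like :: "nat \<Rightarrow> ('a::field_char_0 \<Rightarrow> real) \<Rightarrow> bool" where
  "Cp_like p nv \<longleftrightarrow>
     (\<forall>x. 0 \<le> nv x) \<and> (\<forall>x. nv x = 0 \<longleftrightarrow> x = 0) \<and>
     (\<forall>x y. nv (x * y) = nv x * nv y) \<and>
     (\<forall>x y. nv (x + y) \<le> max (nv x) (nv y)) \<and>
     nv (of_nat p) = 1 / real p \<and>
     (\<forall>X. (\<forall>e>0. \<exists>M. \<forall>m\<ge>M. \<forall>n\<ge>M. nv (X m - X n) < e) \<longrightarrow> (\<exists>L. nv_tendsto nv X L)) \<and>
     (\<forall>(d::nat) (c::nat \<Rightarrow> 'a). d > 0 \<longrightarrow> (\<exists>x. x ^ d + (\<Sum>i<d. c i * x ^ i) = 0))"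

definition qint :: "'a::field_char_0 \<Rightarrow> int \<Rightarrow> 'a" where
  "qint q x = (if q = 1 then of_int x else (1 - q powi x) / (1 - q))"

definition qbern :: "nat \<Rightarrow> nat \<Rightarrow> 'a::field_char_0 \<Rightarrow> nat \<Rightarrow> 'a" where
  "qbern k n q x = of_nat (n choose k) * qint q (int x) ^ k * qint q (1 - int x) ^ (n - k)"

definition ferm_exists :: "nat \<Rightarrow> ('a::field \<Rightarrow> real) \<Rightarrow> (nat \<Rightarrow> 'a) \<Rightarrow> bool" where
  "ferm_exists p nv f \<longleftrightarrow> (\<exists>L. nv_tendsto nv (\<lambda>N. \<Sum>x<p ^ N. f x * (-1) ^ x) L)"

definition ferm_int :: "nat \<Rightarrow> ('a::field \<Rightarrow> real) \<Rightarrow> (nat \<Rightarrow> 'a) \<Rightarrow> 'a" where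
  "ferm_int p nv f = (THE L. nv_tendsto nv (\<lambda>N. \<Sum>x<p ^ N. f x * (-1) ^ x) L)"

definition qEuler :: "nat \<Rightarrow> ('a::field_char_0 \<Rightarrow> real) \<Rightarrow> nat \<Rightarrow> 'a \<Rightarrow> 'a" where
  "qEuler p nv j q = ferm_int p nv (\<lambda>x. qint q (int x) ^ j)"

end

theory Submission
  imports Defs
begin

locale cpq =
  fixes p :: nat and nv :: "'a::field_char_0 \<Rightarrow> real" and q :: 'a
  assumes cp: "Cp_like p nv" and pp: "prime p" and podd: "odd p" and qt: "nv (1-q) < 1"
begin

lemma nv_nonneg: "0 \<le> nv x" using cp by (simp add: Cp_like_def)
lemma nv_zero_iff: "nv x = 0 \<longleftrightarrow> x = 0" using cp by (simp add: Cp_like_def)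
lemma nv_mult: "nv (x*y) = nv x * nv y" using cp by (simp add: Cp_like_def)
lemma nv_ultra: "nv (x+y) \<le> max (nv x) (nv y)" using cp by (simp add: Cp_like_def)
lemma nv_p: "nv (of_nat p) = 1 / real p" using cp by (simp add: Cp_like_def)
lemma nv_complete: "(\<forall>e>0. \<exists>M. \<forall>m\<ge>M. \<forall>n\<ge>M. nv (X m - X n) < e) \<Longrightarrow> (\<exists>L. nv_tendsto nv X L)"
  using cp unfolding Cp_like_def by blast

lemma nv_one[simp]: "nv 1 = 1"
proof -
  have "nv 1 = nv 1 * nv 1" using nv_mult[of 1 1] by simp
  moreover have "nv 1 \<noteq> 0" using nv_zero_iff by simp
  ultimately show ?thesis by simp
qed

lemma nv_0[simp]: "nv 0 = 0" using nv_zero_iff by simp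

lemma nv_m1[simp]: "nv (-1) = 1"
proof -
  have "nv (-1) * nv (-1) = 1" using nv_mult[of "-1" "-1"] by simp
  moreover have "nv (-1) \<ge> 0" by (rule nv_nonneg)
  ultimately show ?thesis
    using power2_eq_1_iff[of "nv (-1)"] by (auto simp: power2_eq_square)
qed

lemma nv_minus[simp]: "nv (-x) = nv x"
  using nv_mult[of "-1" x] by simp

lemma nv_commute: "nv (x - y) = nv (y - x)"
  by (metis minus_diff_eq nv_minus)

lemma nv_power: "nv (x^n) = nv x ^ n"
  by (induction n) (simp_all add: nv_mult)

lemma nv_m1_pow[simp]: "nv ((-1)^n) = 1"
  by (simp add: nv_power)

lemma nv_add_le: "nv x \<le> B \<Longrightarrow> nv y \<le> B \<Longrightarrow> nv (x+y) \<le> B"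
  using nv_ultra[of x y] by linarith

lemma nv_diff_le: "nv x \<le> B \<Longrightarrow> nv y \<le> B \<Longrightarrow> nv (x-y) \<le> B"
  using nv_add_le[of x B "-y"] by simp

lemma nv_sum_le: "(\<And>i. i \<in> A \<Longrightarrow> nv (f i) \<le> B) \<Longrightarrow> 0 \<le> B \<Longrightarrow> nv (sum f A) \<le> B"
proof (induction A rule: infinite_finite_induct)
  case (insert x F) then show ?case by (simp add: nv_add_le)
qed auto

lemma nv_mult_le: "nv x \<le> a \<Longrightarrow> nv y \<le> b \<Longrightarrow> 0 \<le> a \<Longrightarrow> nv (x*y) \<le> a*b"
  by (simp add: nv_mult mult_mono nv_nonneg)

lemma nv_mult_le1: "nv x \<le> 1 \<Longrightarrow> nv y \<le> b \<Longrightarrow> nv (x*y) \<le> b"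
  using nv_mult_le[of x 1 y b] by simp

lemma nv_of_nat_le: "nv (of_nat m) \<le> 1"
  by (induction m) (simp_all add: nv_add_le)

lemma nv_pow_le1: "nv x \<le> 1 \<Longrightarrow> nv (x^n) \<le> 1"
  by (simp add: nv_power nv_nonneg power_le_one)

lemma nv_q: "nv q = 1"
proof -
  have "nv q \<le> 1" using nv_diff_le[of 1 1 "1-q"] qt by simp
  moreover have "1 \<le> max (nv q) (nv (1-q))" using nv_ultra[of q "1-q"] by simp
  ultimately show ?thesis using qt by linarith
qed

lemma q_nz: "q \<noteq> 0" using nv_q by auto

lemma p_ge3: "p \<ge> 3"
  using pp podd prime_ge_2_nat[OF pp] by (metis Suc_leI antisym_conv2 even_numeral numeral_2_eq_2 numeral_3_eq_3 not_less_eq_eq)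

definition qn :: "nat \<Rightarrow> 'a" where "qn x = qint q (int x)"

lemma qn_add: "qn (a+b) = qn a + q^a * qn b"
proof (cases "q = 1")
  case True then show ?thesis unfolding qn_def qint_def by simp
next
  case False
  then have "1 - q \<noteq> 0" by simp
  then show ?thesis using False by (simp add: qn_def qint_def field_simps power_add flip: of_nat_add)
qed

lemma qn_t: "(1-q) * qn a = 1 - q^a"
  unfolding qn_def qint_def by (cases "q = 1") simp_all

lemma qn_0[simp]: "qn 0 = 0" by (simp add: qn_def qint_def)
lemma qn_1[simp]: "qn (Suc 0) = 1" by (simp add: qn_def qint_def)

lemma qn_norm: "nv (qn a) \<le> 1"
proof (induction a)
  case (Suc a)
  have "qn (Suc a) = qn a + q^a * qn 1" using qn_add[of a 1] by simp
  also have "nv \<dots> \<le> 1" using Suc nv_q by (intro nv_add_le) (simp_all add: nv_mult nv_power)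
  finally show ?case .
qed simp

lemma qn_1m: "q^x * qint q (1 - int x) = 1 - qn x"
proof (cases "q = 1")
  case True then show ?thesis unfolding qn_def qint_def by simp
next
  case False
  then have h: "1 - q \<noteq> 0" by simp
  have "q powi (1 - int x) = q / q^x" using q_nz by (simp add: power_int_diff)
  then show ?thesis using False h q_nz by (simp add: qn_def qint_def field_simps)
qed

lemma qn_mult: "qn (a*b) = qn a * (\<Sum>r<b. q^(a*r))"
proof (induction b)
  case (Suc b)
  have "qn (a * Suc b) = qn (a*b) + q^(a*b) * qn a" using qn_add[of "a*b" a] by (simp add: add.commute)
  then show ?case using Suc by (simp add: algebra_simps)
qed simp

definition rho :: real where "rho = max (1 / real p) (nv (1-q))"

lemma rho_nonneg: "0 \<le> rho" unfolding rho_def by (simp add: nv_nonneg le_max_iff_disj)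
lemma rho_lt1: "rho < 1" unfolding rho_def using qt p_ge3 by simp

lemma qpow_m1: "nv (q^m - 1) \<le> nv (1-q)"
proof -
  have "q^m - 1 = - ((1-q) * qn m)" using qn_t[of m] by simp
  then show ?thesis using qn_norm[of m] nv_nonneg[of "1-q"]
    by (simp add: nv_mult mult_left_le)
qed

lemma sum_pow_bound: "nv (\<Sum>r<p. q^(a*r)) \<le> rho"
proof -
  have "(\<Sum>r<p. q^(a*r)) = of_nat p + (\<Sum>r<p. q^(a*r) - 1)"
    by (simp add: sum_subtractf)
  also have "nv \<dots> \<le> rho"
  proof (intro nv_add_le)
    show "nv (of_nat p) \<le> rho" using nv_p rho_def by simp
    show "nv (\<Sum>r<p. q^(a*r) - 1) \<le> rho"
      using qpow_m1 rho_nonneg unfolding rho_def by (intro nv_sum_le) (auto intro: le_trans simp: le_max_iff_disj)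
  qed
  finally show ?thesis .
qed

lemma qn_ppow: "nv (qn (p^N)) \<le> rho^N"
proof (induction N)
  case (Suc N)
  have "qn (p^Suc N) = qn (p^N) * (\<Sum>r<p. q^(p^N*r))" using qn_mult[of "p^N" p] by (simp add: mult.commute)
  then have "nv (qn (p^Suc N)) = nv (qn (p^N)) * nv (\<Sum>r<p. q^(p^N*r))" by (simp add: nv_mult)
  also have "\<dots> \<le> rho^N * rho" using Suc sum_pow_bound[of "p^N"] rho_nonneg
    by (intro mult_mono) (simp_all add: nv_nonneg)
  finally show ?case by (simp add: mult.commute)
qed simp

lemma qn_ipN: "nv (qn (p^N * i)) \<le> rho^N"
proof -
  have "nv (\<Sum>r<i. q^(p^N*r)) \<le> 1" using nv_q by (intro nv_sum_le) (simp_all add: nv_power)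
  then have "nv (qn (p^N) * (\<Sum>r<i. q^(p^N*r))) \<le> rho^N * 1"
    using qn_ppow[of N] rho_nonneg by (simp only: nv_mult, intro mult_mono) (simp_all add: nv_nonneg)
  then show ?thesis using qn_mult[of "p^N" i] by simp
qed

definition S :: "nat \<Rightarrow> (nat \<Rightarrow> 'a) \<Rightarrow> 'a" where
  "S N f = (\<Sum>x<p^N. f x * (-1)^x)"

lemma alt_sum_odd: assumes "odd m" shows "(\<Sum>i<m. (-1::'a)^i) = 1"
proof -
  have "(\<Sum>i<2*k+1. (-1::'a)^i) = 1" for k by (induction k) simp_all
  moreover from assms obtain k where "m = 2*k+1" using oddE by blast
  ultimately show ?thesis by simp
qed

lemma S_Suc: "S (Suc N) f = (\<Sum>i<p. \<Sum>y<p^N. f (y + p^N*i) * (-1)^i * (-1)^y)"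
proof -
  have oddM: "odd (p^N)" using podd by simp
  have "S (Suc N) f = (\<Sum>i<p. \<Sum>x\<in>{i*p^N..<i*p^N+p^N}. f x * (-1)^x)"
    unfolding S_def using sum.nat_group[of "\<lambda>x. f x * (-1)^x" "p^N" p]
    by (simp add: mult.commute)
  also have "\<dots> = (\<Sum>i<p. \<Sum>y<p^N. f (y + p^N*i) * (-1)^i * (-1)^y)"
  proof (rule sum.cong[OF refl])
    fix i
    have "(\<Sum>x\<in>{i*p^N..<i*p^N+p^N}. f x * (-1)^x) = (\<Sum>x\<in>{0+i*p^N..<p^N+i*p^N}. f x * (-1)^x)"
      by (simp add: add.commute)
    also have "\<dots> = (\<Sum>y\<in>{0..<p^N}. f (y + i*p^N) * (-1)^(y + i*p^N))"
      by (rule sum.shift_bounds_nat_ivl)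
    also have "\<dots> = (\<Sum>y<p^N. f (y + p^N*i) * (-1)^i * (-1)^y)"
    proof (rule sum.cong)
      fix y
      have "(-1::'a)^(y + i*p^N) = (-1)^y * ((-1)^(p^N))^i"
        by (simp only: power_add mult.commute[of i] power_mult)
      also have "\<dots> = (-1)^y * (-1)^i" using oddM by simp
      finally show "f (y + i*p^N) * (-1)^(y + i*p^N) = f (y + p^N*i) * (-1)^i * (-1)^y"
        by (simp add: mult.commute mult.left_commute)
    qed (auto simp: atLeast0LessThan)
    finally show "(\<Sum>x\<in>{i*p^N..<i*p^N+p^N}. f x * (-1)^x) = (\<Sum>y<p^N. f (y + p^N*i) * (-1)^i * (-1)^y)" .
  qed
  finally show ?thesis .
qed

lemma S_diff: "S (Suc N) f - S N f = (\<Sum>i<p. \<Sum>y<p^N. (f (y + p^N*i) - f y) * (-1)^i * (-1)^y)"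
proof -
  have "S N f = (\<Sum>i<p. (-1)^i) * S N f" using alt_sum_odd[OF podd] by simp
  also have "\<dots> = (\<Sum>i<p. \<Sum>y<p^N. f y * (-1)^i * (-1)^y)"
    unfolding S_def sum_distrib_right by (simp add: sum_distrib_left mult_ac)
  finally show ?thesis unfolding S_Suc by (simp add: sum_subtractf[symmetric] algebra_simps)
qed

lemma S_step:
  assumes "\<And>y i. i < p \<Longrightarrow> nv (f (y + p^N*i) - f y) \<le> rho^N"
  shows "nv (S (Suc N) f - S N f) \<le> rho^N"
  unfolding S_diff using assms rho_nonneg
  by (intro nv_sum_le) (simp_all add: nv_mult)

lemma nv_tendsto_unique: "nv_tendsto nv X L \<Longrightarrow> nv_tendsto nv X L' \<Longrightarrow> L = L'"
proof -
  assume a: "nv_tendsto nv X L" "nv_tendsto nv X L'"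
  have "nv (L - L') \<le> nv (X N - L) + nv (X N - L')" for N
    using nv_ultra[of "L - X N" "X N - L'"] nv_commute[of "X N" L] nv_nonneg[of "X N - L"] nv_nonneg[of "X N - L'"]
    by simp
  moreover have "(\<lambda>N. nv (X N - L) + nv (X N - L')) \<longlonglongrightarrow> 0"
    using tendsto_add[OF a[unfolded nv_tendsto_def]] by simp
  ultimately have "nv (L - L') \<le> 0"
    by (intro LIMSEQ_le_const[of _ 0]) auto
  then have "nv (L - L') = 0" using nv_nonneg[of "L-L'"] by linarith
  then show ?thesis using nv_zero_iff[of "L-L'"] by simp
qed

lemma S_conv:
  assumes "\<And>N y i. i < p \<Longrightarrow> nv (f (y + p^N*i) - f y) \<le> rho^N"
  shows "\<exists>L. nv_tendsto nv (\<lambda>N. S N f) L"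
proof (rule nv_complete, intro allI impI)
  have mono: "nv (S n f - S m f) \<le> rho^m" if "m \<le> n" for m n
    using that
  proof (induction n rule: dec_induct)
    case base then show ?case by (simp add: rho_nonneg)
  next
    case (step n)
    have "nv (S (Suc n) f - S n f) \<le> rho^n"
      using S_step[where N=n and f=f] assms by blast
    also have "rho^n \<le> rho^m" using power_decreasing[OF step(1) rho_nonneg] rho_lt1 by simp
    finally have "nv ((S (Suc n) f - S n f) + (S n f - S m f)) \<le> rho^m"
      using step(3) by (rule nv_add_le)
    then show ?case by simp
  qed
  fix e :: real assume "e > 0"
  then obtain K where K: "rho^K < e" using real_arch_pow_inv rho_lt1 by blast
  show "\<exists>M. \<forall>m\<ge>M. \<forall>n\<ge>M. nv (S m f - S n f) < e"
  proof (intro exI allI impI)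
    fix m n assume "K \<le> m" "K \<le> n"
    have "nv (S m f - S n f) \<le> rho^K"
    proof (cases "m \<le> n")
      case True
      then have "nv (S m f - S n f) \<le> rho^m" using mono nv_commute by metis
      then show ?thesis using power_decreasing[OF \<open>K \<le> m\<close> rho_nonneg] rho_lt1 by linarith
    next
      case False
      then have "nv (S m f - S n f) \<le> rho^n" using mono by simp
      then show ?thesis using power_decreasing[OF \<open>K \<le> n\<close> rho_nonneg] rho_lt1 by linarith
    qed
    then show "nv (S m f - S n f) < e" using K by linarith
  qed
qed

lemma qn_pow_conv: "\<exists>L. nv_tendsto nv (\<lambda>N. S N (\<lambda>x. qn x ^ j)) L"
proof (rule S_conv)
  fix N y i
  let ?a = "qn (y + p^N*i)" and ?b = "qn y"
  have ab: "?a - ?b = q^y * qn (p^N*i)" by (simp add: qn_add)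
  have "?a^j - ?b^j = (?a - ?b) * (\<Sum>r<j. ?b^(j - Suc r) * ?a^r)" by (rule power_diff_sumr2)
  moreover have "nv (\<Sum>r<j. ?b^(j - Suc r) * ?a^r) \<le> 1"
    using qn_norm by (intro nv_sum_le) (simp_all add: nv_mult nv_power mult_le_one power_le_one nv_nonneg)
  moreover have "nv (?a - ?b) \<le> rho^N" unfolding ab using qn_ipN nv_q by (simp add: nv_mult nv_power)
  ultimately show "nv (qn (y + p^N*i) ^ j - qn y ^ j) \<le> rho^N"
    using nv_mult_le[of "?a - ?b" "rho^N" _ 1] rho_nonneg by simp
qed

definition cc :: "nat \<Rightarrow> nat \<Rightarrow> 'a" where "cc l m = of_nat ((l+m-1) choose m)"
definition PP :: "'a \<Rightarrow> nat \<Rightarrow> nat \<Rightarrow> 'a" where "PP u l M = (\<Sum>m<M. cc l m * u^m)"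

lemma cc_gchoose: "((of_nat (l+m) - 1 :: 'a) gchoose m) = cc l m"
proof (cases "l + m = 0")
  case True then show ?thesis by (simp add: cc_def)
next
  case False
  then obtain j where j: "l + m = Suc j" using not0_implies_Suc by blast
  then have "(of_nat (l+m) - 1 :: 'a) = of_nat (l+m-1)" by (simp del: of_nat_add add: j)
  then show ?thesis by (simp add: cc_def binomial_gbinomial)
qed

lemma cc_pascal: "m \<ge> 1 \<Longrightarrow> cc (Suc l) m = cc l m + cc (Suc l) (m-1)"
proof -
  assume m: "m \<ge> 1"
  then have "(l+m choose m) = (l+m-1 choose (m-1)) + (l+m-1 choose m)"
    using choose_reduce_nat[of "l+m" m] by simp
  moreover have "Suc l + (m-1) - 1 = l+m-1" "Suc l + m - 1 = l + m" using m by auto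
  ultimately show ?thesis unfolding cc_def by simp
qed

lemma PP0: "M \<ge> 1 \<Longrightarrow> PP u 0 M = 1"
proof (induction M rule: dec_induct)
  case base then show ?case by (simp add: PP_def cc_def)
next
  case (step M) then show ?case by (simp add: PP_def cc_def)
qed

lemma PP_rec: "M \<ge> 1 \<Longrightarrow> (1-u) * PP u (Suc l) M = PP u l M - cc (Suc l) (M-1) * u^M"
proof (induction M rule: dec_induct)
  case base then show ?case by (simp add: PP_def cc_def algebra_simps)
next
  case (step M)
  have "(1-u) * PP u (Suc l) (Suc M) = (1-u) * PP u (Suc l) M + (1-u) * cc (Suc l) M * u^M"
    by (simp add: PP_def algebra_simps)
  also have "\<dots> = PP u l M - cc (Suc l) (M-1) * u^M + (1-u) * cc (Suc l) M * u^M"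
    using step by simp
  also have "\<dots> = PP u l M + cc l M * u^M - cc (Suc l) M * u^(Suc M)"
    using cc_pascal[of M l] step(1) by (simp add: algebra_simps)
  also have "\<dots> = PP u l (Suc M) - cc (Suc l) (Suc M - 1) * u^(Suc M)"
    by (simp add: PP_def)
  finally show ?case .
qed

lemma PP_err:
  assumes "nv u \<le> 1" "nv (1-u) \<le> 1" "M \<ge> 1"
  shows "nv ((1-u)^l * PP u l M - 1) \<le> nv u ^ M"
proof (induction l)
  case 0 then show ?case using assms PP0 by (simp add: nv_nonneg)
next
  case (Suc l)
  have "(1-u)^Suc l * PP u (Suc l) M - 1 = (1-u)^l * ((1-u) * PP u (Suc l) M) - 1"
    by (simp add: mult_ac)
  also have "\<dots> = ((1-u)^l * PP u l M - 1) - ((1-u)^l * cc (Suc l) (M-1)) * u^M"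
    unfolding PP_rec[OF assms(3)] by (simp add: algebra_simps)
  also have "nv \<dots> \<le> nv u ^ M"
  proof (rule nv_diff_le[OF Suc])
    have "nv ((1-u)^l * cc (Suc l) (M-1)) \<le> 1"
      using assms nv_pow_le1 nv_of_nat_le unfolding cc_def by (simp add: nv_mult mult_le_one nv_nonneg)
    then show "nv ((1-u)^l * cc (Suc l) (M-1) * u^M) \<le> nv u ^ M"
      by (simp add: nv_mult_le1 nv_power)
  qed
  finally show ?case .
qed

definition coef :: "nat \<Rightarrow> nat \<Rightarrow> nat \<Rightarrow> 'a" where
  "coef K l m = ((of_nat (l + m) - 1 :: 'a) gchoose m) * of_nat (K choose l) * (-1) ^ (l + m) * q ^ l * (q - 1) ^ m"

definition GG :: "nat \<Rightarrow> nat \<Rightarrow> nat \<Rightarrow> nat \<Rightarrow> 'a" where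
  "GG K k M x = (\<Sum>m<M. \<Sum>l=0..K. coef K l m * qn x ^ (l+m+k))"

definition FF :: "nat \<Rightarrow> nat \<Rightarrow> nat \<Rightarrow> 'a" where
  "FF K k x = qn x ^ k * qint q (1 - int x) ^ K"

lemma coef_term: "coef K l m * a ^ (l+m+k) = a^k * (of_nat (K choose l) * (-q*a)^l) * (cc l m * ((1-q)*a)^m)"
proof -
  have h: "(1-q)^m = (-1)^m * (q-1)^m"
    by (metis mult_minus1 minus_diff_eq power_mult_distrib)
  have h2: "(-q*a)^l = (-1)^l * q^l * a^l" by (simp only: power_mult_distrib power_minus[of q l])
  have h3: "((1-q)*a)^m = (-1)^m * (q-1)^m * a^m" by (simp only: power_mult_distrib h)
  show ?thesis unfolding coef_def cc_gchoose h2 h3 power_add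
    by (simp only: mult_ac)
qed

lemma GG_eq: "GG K k M x = qn x ^ k * (\<Sum>l=0..K. of_nat (K choose l) * (-q*qn x)^l * PP ((1-q)*qn x) l M)"
proof -
  have "GG K k M x = (\<Sum>m<M. \<Sum>l=0..K. qn x ^ k * (of_nat (K choose l) * (-q*qn x)^l) * (cc l m * ((1-q)*qn x)^m))"
    unfolding GG_def coef_term by simp
  also have "\<dots> = (\<Sum>l=0..K. \<Sum>m<M. qn x ^ k * (of_nat (K choose l) * (-q*qn x)^l) * (cc l m * ((1-q)*qn x)^m))"
    by (rule sum.swap)
  also have "\<dots> = qn x ^ k * (\<Sum>l=0..K. of_nat (K choose l) * (-q*qn x)^l * PP ((1-q)*qn x) l M)"
    unfolding PP_def by (simp add: sum_distrib_left mult_ac)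
  finally show ?thesis .
qed

lemma FF_eq: "FF K k x * (q^x)^K = qn x ^ k * (\<Sum>l=0..K. of_nat (K choose l) * (-q*qn x)^l * (q^x)^(K-l))"
proof -
  have "FF K k x * (q^x)^K = qn x ^ k * (q^x * qint q (1 - int x))^K"
    unfolding FF_def by (simp add: power_mult_distrib mult_ac)
  also have "\<dots> = qn x ^ k * ((-q*qn x) + q^x)^K"
  proof -
    have "1 - qn x = -q*qn x + q^x" using qn_t[of x] by (simp add: algebra_simps)
    then show ?thesis unfolding qn_1m by simp
  qed
  also have "\<dots> = qn x ^ k * (\<Sum>l=0..K. of_nat (K choose l) * (-q*qn x)^l * (q^x)^(K-l))"
    unfolding binomial_ring by (simp add: atLeast0AtMost)
  finally show ?thesis .
qed

lemma pointwise:
  assumes "M \<ge> 1"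
  shows "nv (GG K k M x - FF K k x) \<le> nv (1-q) ^ M"
proof -
  define a where "a = qn x"
  define u where "u = (1-q) * a"
  define w where "w = q^x"
  have uw: "1 - u = w" unfolding u_def w_def a_def using qn_t[of x] by simp
  have nw: "nv w = 1" unfolding w_def using nv_q by (simp add: nv_power)
  have na: "nv a \<le> 1" unfolding a_def by (rule qn_norm)
  have nu: "nv u \<le> nv (1-q)" unfolding u_def using na nv_nonneg[of "1-q"] by (simp add: nv_mult mult_left_le)
  have nu1: "nv u \<le> 1" using nu qt by linarith
  have nqa: "nv (-q*a) \<le> 1" using na nv_q by (simp add: nv_mult)
  have "(GG K k M x - FF K k x) * w^K =
        a^k * (\<Sum>l=0..K. of_nat (K choose l) * (-q*a)^l * PP u l M * w^K - of_nat (K choose l) * (-q*a)^l * w^(K-l))"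
  proof -
    have e1: "GG K k M x * w^K = a^k * (\<Sum>l=0..K. of_nat (K choose l) * (-q*a)^l * PP u l M * w^K)"
      unfolding GG_eq a_def[symmetric] u_def[symmetric] by (simp add: sum_distrib_right mult.assoc)
    have e2: "FF K k x * w^K = a^k * (\<Sum>l=0..K. of_nat (K choose l) * (-q*a)^l * w^(K-l))"
      unfolding w_def a_def by (rule FF_eq)
    have "(GG K k M x - FF K k x) * w^K = GG K k M x * w^K - FF K k x * w^K" by (rule left_diff_distrib)
    also have "\<dots> = a^k * ((\<Sum>l=0..K. of_nat (K choose l) * (-q*a)^l * PP u l M * w^K) - (\<Sum>l=0..K. of_nat (K choose l) * (-q*a)^l * w^(K-l)))"
      unfolding e1 e2 by (rule right_diff_distrib[symmetric])
    finally show ?thesis by (simp only: sum_subtractf)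
  qed
  also have "\<dots> = a^k * (\<Sum>l=0..K. (of_nat (K choose l) * (-q*a)^l * w^(K-l)) * (w^l * PP u l M - 1))"
  proof -
    have "of_nat (K choose l) * (-q*a)^l * PP u l M * w^K - of_nat (K choose l) * (-q*a)^l * w^(K-l)
          = (of_nat (K choose l) * (-q*a)^l * w^(K-l)) * (w^l * PP u l M - 1)" if "l \<in> {0..K}" for l
    proof -
      have "w^K = w^(K-l) * w^l" using that by (simp flip: power_add)
      then show ?thesis by (simp add: algebra_simps)
    qed
    then have "(\<Sum>l=0..K. of_nat (K choose l) * (-q*a)^l * PP u l M * w^K - of_nat (K choose l) * (-q*a)^l * w^(K-l))
        = (\<Sum>l=0..K. (of_nat (K choose l) * (-q*a)^l * w^(K-l)) * (w^l * PP u l M - 1))"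
      by (intro sum.cong) auto
    then show ?thesis by (simp only:)
  qed
  finally have eq: "(GG K k M x - FF K k x) * w^K = \<dots>" .
  have "nv (a^k * (\<Sum>l=0..K. (of_nat (K choose l) * (-q*a)^l * w^(K-l)) * (w^l * PP u l M - 1))) \<le> nv u ^ M"
  proof (rule nv_mult_le1)
    show "nv (a^k) \<le> 1" using na by (rule nv_pow_le1)
    show "nv (\<Sum>l=0..K. (of_nat (K choose l) * (-q*a)^l * w^(K-l)) * (w^l * PP u l M - 1)) \<le> nv u ^ M"
    proof (rule nv_sum_le)
      fix l
      have "nv (of_nat (K choose l) * (-q*a)^l * w^(K-l)) \<le> 1"
        using nv_of_nat_le[of "K choose l"] nv_pow_le1[OF nqa, of l] nw
        by (simp add: nv_mult nv_power mult_le_one nv_nonneg)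
      moreover have "nv (w^l * PP u l M - 1) \<le> nv u ^ M"
        using PP_err[OF nu1 _ assms, of l] uw nw by simp
      ultimately show "nv ((of_nat (K choose l) * (-q*a)^l * w^(K-l)) * (w^l * PP u l M - 1)) \<le> nv u ^ M"
        by (rule nv_mult_le1)
    qed (simp add: nv_nonneg)
  qed
  then have "nv ((GG K k M x - FF K k x) * w^K) \<le> nv u ^ M"
    by (simp only: eq)
  then have "nv (GG K k M x - FF K k x) \<le> nv u ^ M"
    using nw by (simp add: nv_mult nv_power)
  also have "\<dots> \<le> nv (1-q) ^ M" using nu by (simp add: power_mono nv_nonneg)
  finally show ?thesis .
qed

lemma S_sum: "S N (\<lambda>x. \<Sum>i\<in>A. g i x) = (\<Sum>i\<in>A. S N (g i))"
  unfolding S_def sum_distrib_right by (rule sum.swap)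

lemma S_cmult: "S N (\<lambda>x. c * h x) = c * S N h"
  unfolding S_def by (simp add: sum_distrib_left mult.assoc)

lemma S_diff_fun: "S N f - S N g = S N (\<lambda>x. f x - g x)"
  unfolding S_def by (simp add: sum_subtractf left_diff_distrib)

lemma nvt_add: "nv_tendsto nv X L \<Longrightarrow> nv_tendsto nv Y L' \<Longrightarrow> nv_tendsto nv (\<lambda>N. X N + Y N) (L + L')"
proof -
  assume a: "nv_tendsto nv X L" "nv_tendsto nv Y L'"
  have lim: "(\<lambda>N. nv (X N - L) + nv (Y N - L')) \<longlonglongrightarrow> 0"
    using tendsto_add[OF a[unfolded nv_tendsto_def]] by simp
  have le: "nv (X N + Y N - (L + L')) \<le> nv (X N - L) + nv (Y N - L')" for N
  proof -
    have e: "X N + Y N - (L + L') = (X N - L) + (Y N - L')" by simp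
    have "nv ((X N - L) + (Y N - L')) \<le> max (nv (X N - L)) (nv (Y N - L'))" by (rule nv_ultra)
    also have "\<dots> \<le> nv (X N - L) + nv (Y N - L')"
      using nv_nonneg[of "X N - L"] nv_nonneg[of "Y N - L'"] by (simp add: max_def)
    finally show ?thesis unfolding e .
  qed
  show ?thesis unfolding nv_tendsto_def
  proof (rule tendsto_sandwich[where f="\<lambda>_. 0" and h="\<lambda>N. nv (X N - L) + nv (Y N - L')"])
    show "\<forall>\<^sub>F N in sequentially. 0 \<le> nv (X N + Y N - (L + L'))" by (simp add: nv_nonneg)
    show "\<forall>\<^sub>F N in sequentially. nv (X N + Y N - (L + L')) \<le> nv (X N - L) + nv (Y N - L')"
      using le by simp
  qed (simp_all add: lim)
qed

lemma nvt_const0: "nv_tendsto nv (\<lambda>N. 0) 0" unfolding nv_tendsto_def by simp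

lemma nvt_sum: "(\<And>i. i \<in> A \<Longrightarrow> nv_tendsto nv (X i) (L i)) \<Longrightarrow> nv_tendsto nv (\<lambda>N. \<Sum>i\<in>A. X i N) (\<Sum>i\<in>A. L i)"
proof (induction A rule: infinite_finite_induct)
  case (insert x F)
  have a: "nv_tendsto nv (X x) (L x)" using insert.prems by simp
  have b: "nv_tendsto nv (\<lambda>N. \<Sum>i\<in>F. X i N) (\<Sum>i\<in>F. L i)"
    by (rule insert.IH) (simp add: insert.prems)
  have "nv_tendsto nv (\<lambda>N. X x N + (\<Sum>i\<in>F. X i N)) (L x + (\<Sum>i\<in>F. L i))"
    using nvt_add[OF a b] by simp
  then show ?case using insert.hyps by simp
next
  case (infinite A) then show ?case using nvt_const0 by simp
next
  case empty then show ?case using nvt_const0 by simp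
qed

lemma nvt_cmult: "nv_tendsto nv X L \<Longrightarrow> nv_tendsto nv (\<lambda>N. c * X N) (c * L)"
  unfolding nv_tendsto_def
  using tendsto_mult[OF tendsto_const[of "nv c"], of "\<lambda>N. nv (X N - L)" 0 sequentially]
  by (simp add: nv_mult flip: right_diff_distrib)

lemma E_conv: "nv_tendsto nv (\<lambda>N. S N (\<lambda>x. qn x ^ j)) (qEuler p nv j q)"
proof -
  obtain L where L: "nv_tendsto nv (\<lambda>N. S N (\<lambda>x. qn x ^ j)) L" using qn_pow_conv by blast
  have "qEuler p nv j q = (THE L. nv_tendsto nv (\<lambda>N. S N (\<lambda>x. qn x ^ j)) L)"
    unfolding qEuler_def ferm_int_def S_def qn_def ..
  also have "\<dots> = L"
  proof (rule the_equality)
    show "nv_tendsto nv (\<lambda>N. S N (\<lambda>x. qn x ^ j)) L" by (rule L)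
  next
    fix x assume "nv_tendsto nv (\<lambda>N. S N (\<lambda>x. qn x ^ j)) x"
    then show "x = L" using L by (rule nv_tendsto_unique)
  qed
  finally show ?thesis using L by simp
qed

lemma nv_lt_add: "nv x < e \<Longrightarrow> nv y < e \<Longrightarrow> nv (x+y) < e"
  using nv_ultra[of x y] by linarith

lemma main_loc:
  assumes kn: "k \<le> n"
  shows "ferm_exists p nv (\<lambda>x. qbern k n q x / of_nat (n choose k)) \<and>
         nv_sums nv
           (\<lambda>m. \<Sum>l=0..n-k. ((of_nat (l + m) - 1 :: 'a) gchoose m) * of_nat ((n - k) choose l)
                   * (-1) ^ (l + m) * q ^ l * (q - 1) ^ m * qEuler p nv (l + m + k) q)
           (ferm_int p nv (\<lambda>x. qbern k n q x / of_nat (n choose k)))"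
proof -
  define K where "K = n - k"
  define t where "t = nv (1-q)"
  have t0: "0 \<le> t" and t1: "t < 1" unfolding t_def using nv_nonneg qt by auto
  have feq: "(\<lambda>x. qbern k n q x / of_nat (n choose k)) = FF K k"
  proof
    fix x
    have "(of_nat (n choose k) :: 'a) \<noteq> 0" using kn by simp
    then show "qbern k n q x / of_nat (n choose k) = FF K k x"
      unfolding qbern_def FF_def K_def qn_def by simp
  qed
  define sM where "sM M = (\<Sum>m<M. \<Sum>l=0..K. coef K l m * qEuler p nv (l+m+k) q)" for M
  have Gconv: "nv_tendsto nv (\<lambda>N. S N (GG K k M)) (sM M)" for M
  proof -
    have "S N (GG K k M) = (\<Sum>m<M. \<Sum>l=0..K. coef K l m * S N (\<lambda>x. qn x ^ (l+m+k)))" for N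
      unfolding GG_def S_sum S_cmult ..
    then show ?thesis unfolding sM_def
      by (simp only:) (intro nvt_sum nvt_cmult E_conv)
  qed
  have approx: "nv (S N (FF K k) - S N (GG K k M)) \<le> t^M" if "M \<ge> 1" for N M
    unfolding S_diff_fun unfolding S_def
    using pointwise[OF that, of K k] nv_commute t0
    by (intro nv_sum_le) (simp_all add: nv_mult t_def)
  have ev: "\<forall>\<^sub>F N in sequentially. nv (X N - L) < e" if "nv_tendsto nv X L" "e > 0" for X L e
    using order_tendstoD(2)[OF that(1)[unfolded nv_tendsto_def] that(2)] .
  have smallM: "\<exists>M\<ge>1. t^M < e" if e0: "e > 0" for e
  proof -
    obtain m where "t^m < e" using real_arch_pow_inv[OF e0 t1] by blast
    moreover have "t^Suc m \<le> t^m" using t0 t1 by (simp add: mult_left_le_one_le)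
    ultimately show ?thesis by (intro exI[of _ "Suc m"]) auto
  qed
  have "\<exists>L. nv_tendsto nv (\<lambda>N. S N (FF K k)) L"
  proof (rule nv_complete, intro allI impI)
    fix e :: real assume e: "e > 0"
    obtain M where M: "M \<ge> 1" "t^M < e" using smallM[OF e] by blast
    obtain N0 where N0: "\<And>N. N \<ge> N0 \<Longrightarrow> nv (S N (GG K k M) - sM M) < e"
      using ev[OF Gconv e] unfolding eventually_sequentially by blast
    show "\<exists>M. \<forall>m\<ge>M. \<forall>n\<ge>M. nv (S m (FF K k) - S n (FF K k)) < e"
    proof (intro exI allI impI)
      fix m n assume mn: "N0 \<le> m" "N0 \<le> n"
      have eq: "S m (FF K k) - S n (FF K k) = (S m (FF K k) - S m (GG K k M)) + ((S m (GG K k M) - sM M) + (- (S n (GG K k M) - sM M) + (S n (GG K k M) - S n (FF K k))))"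
        by simp
      have f1: "nv (S m (FF K k) - S m (GG K k M)) < e" using approx[OF M(1)] M(2) by (meson le_less_trans)
      have f4: "nv (S n (GG K k M) - S n (FF K k)) < e" using approx[OF M(1)] M(2) nv_commute by (metis le_less_trans)
      have f2: "nv (S m (GG K k M) - sM M) < e" using N0 mn by simp
      have f3: "nv (- (S n (GG K k M) - sM M)) < e" unfolding nv_minus using N0 mn by simp
      show "nv (S m (FF K k) - S n (FF K k)) < e"
        unfolding eq by (rule nv_lt_add[OF f1 nv_lt_add[OF f2 nv_lt_add[OF f3 f4]]])
    qed
  qed
  then obtain L where L: "nv_tendsto nv (\<lambda>N. S N (FF K k)) L" by blast
  have fe: "ferm_exists p nv (FF K k)" using L unfolding ferm_exists_def S_def by blast
  have fi: "ferm_int p nv (FF K k) = L"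
    unfolding ferm_int_def S_def[symmetric]
  proof (rule the_equality)
    show "nv_tendsto nv (\<lambda>N. S N (FF K k)) L" by (rule L)
  next
    fix x assume "nv_tendsto nv (\<lambda>N. S N (FF K k)) x"
    then show "x = L" using L by (rule nv_tendsto_unique)
  qed
  have bound: "nv (sM M - L) \<le> t^M" if M: "M \<ge> 1" for M
  proof (rule field_le_epsilon)
    fix e :: real assume e: "e > 0"
    have "\<forall>\<^sub>F N in sequentially. nv (S N (GG K k M) - sM M) < e \<and> nv (S N (FF K k) - L) < e"
      using ev[OF Gconv e] ev[OF L e] by (rule eventually_conj)
    then obtain N where N: "nv (S N (GG K k M) - sM M) < e" "nv (S N (FF K k) - L) < e"
      unfolding eventually_sequentially by blast
    have "sM M - L = (- (S N (GG K k M) - sM M)) + ((S N (FF K k) - L) - (S N (FF K k) - S N (GG K k M)))"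
      by simp
    also have "nv \<dots> \<le> t^M + e"
    proof -
      have t0': "0 \<le> t^M" using t0 by simp
      have g1: "nv (- (S N (GG K k M) - sM M)) \<le> t^M + e" unfolding nv_minus using N t0' by linarith
      have g2: "nv (S N (FF K k) - L) \<le> t^M + e" using N t0' by linarith
      have g3: "nv (S N (FF K k) - S N (GG K k M)) \<le> t^M + e" using approx[OF M, of N] e by linarith
      show ?thesis by (rule nv_add_le[OF g1 nv_diff_le[OF g2 g3]])
    qed
    finally show "nv (sM M - L) \<le> t^M + e" .
  qed
  have "(\<lambda>M. nv (sM M - L)) \<longlonglongrightarrow> 0"
  proof (rule tendsto_sandwich[where f="\<lambda>_. 0" and h="\<lambda>M. t^M"])
    show "\<forall>\<^sub>F M in sequentially. 0 \<le> nv (sM M - L)" by (simp add: nv_nonneg)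
    show "\<forall>\<^sub>F M in sequentially. nv (sM M - L) \<le> t^M"
      using bound unfolding eventually_sequentially by blast
    show "(\<lambda>M. t^M) \<longlonglongrightarrow> 0" using t0 t1 by (intro LIMSEQ_power_zero) simp
  qed simp
  then have "nv_sums nv (\<lambda>m. \<Sum>l=0..K. coef K l m * qEuler p nv (l+m+k) q) L"
    unfolding nv_sums_def nv_tendsto_def sM_def .
  then show ?thesis unfolding feq fi using fe unfolding coef_def K_def by simp
qed

end

theorem mainTheorem6:
  fixes p :: nat and nv :: "'a::field_char_0 \<Rightarrow> real" and q :: 'a and k n :: nat
  assumes "prime p" and "odd p"
    and "Cp_like p nv"
    and "nv (1 - q) < real p powr (- 1 / (real p - 1))"
    and "k \<le> n"
  shows "ferm_exists p nv (\<lambda>x. qbern k n q x / of_nat (n choose k)) \<and>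
         nv_sums nv
           (\<lambda>m. \<Sum>l=0..n-k. ((of_nat (l + m) - 1 :: 'a) gchoose m) * of_nat ((n - k) choose l)
                   * (-1) ^ (l + m) * q ^ l * (q - 1) ^ m * qEuler p nv (l + m + k) q)
           (ferm_int p nv (\<lambda>x. qbern k n q x / of_nat (n choose k)))"
proof -
  have p1: "1 < real p" using assms(1) prime_gt_1_nat by simp
  have "real p powr (- 1 / (real p - 1)) < 1"
    using p1 by (intro powr_less_one) (simp_all add: divide_neg_pos)
  then have qt: "nv (1 - q) < 1" using assms(4) by linarith
  interpret cpq p nv q by unfold_locales (simp_all add: assms qt)
  show ?thesis by (rule main_loc[OF assms(5)])
qed

end
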